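(* Let $n\ge3$, $1\le k\le n$, and let $\Omega$ be an unbounded domain in $\mathbb{R}^n$ with smooth compact boundary. If $u$ is a smooth positive $k$-admissible solution of $\sigma_k^{1/k}(W[u])=\frac{n-2}{2}u^{\frac{n+2}{n-2}}$ in $\Omega$, then $u(x)\to0$ as $|x|\to\infty$.
   Context: $\sigma_k$ is the $k$th elementary symmetric function of eigenvalues; $\Gamma_k=\{\lambda:\sigma_j(\lambda)>0,\ j\le k\}$. For positive $C^2$ $u$, $W_{ij}[u]=(n-2)\partial_{ij}u-n\frac{\partial_iu\partial_ju}{u}+(\Delta u+\frac{|\nabla u|^2}{u})\delta_{ij}$; $u$ is $k$-admissible if $\lambda(W[u])\in\Gamma_k$ everywhere. *)

theory Defs
  imports "HOL-Analysis.Analysis"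
begin

definition pd :: "'n::finite \<Rightarrow> (real^'n \<Rightarrow> real) \<Rightarrow> real^'n \<Rightarrow> real" where
  "pd i f x = frechet_derivative f (at x) (axis i 1)"

fun iter_pd :: "'n::finite list \<Rightarrow> (real^'n \<Rightarrow> real) \<Rightarrow> real^'n \<Rightarrow> real" where
  "iter_pd [] f = f"
| "iter_pd (i # is) f = pd i (iter_pd is f)"

definition smooth_on :: "(real^'n::finite \<Rightarrow> real) \<Rightarrow> (real^'n) set \<Rightarrow> bool" where
  "smooth_on f S \<longleftrightarrow> (\<forall>is. \<forall>x\<in>S. iter_pd is f differentiable (at x))"

definition smooth_boundary :: "(real^'n::finite) set \<Rightarrow> bool" where
  "smooth_boundary \<Omega> \<longleftrightarrow>
     (\<forall>p\<in>frontier \<Omega>. \<exists>U g. open U \<and> p \<in> U \<and> smooth_on g U \<and>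
        (\<forall>x\<in>U. (\<exists>i. pd i g x \<noteq> 0)) \<and>
        \<Omega> \<inter> U = {x\<in>U. g x < 0} \<and> frontier \<Omega> \<inter> U = {x\<in>U. g x = 0})"

definition sigma :: "nat \<Rightarrow> real^'n::finite \<Rightarrow> real" where
  "sigma k lam = (\<Sum>S\<in>{S. card S = k}. \<Prod>i\<in>S. lam $ i)"

definition Gamma :: "nat \<Rightarrow> (real^'n::finite) set" where
  "Gamma k = {lam. \<forall>j. 1 \<le> j \<and> j \<le> k \<longrightarrow> sigma j lam > 0}"

definition diag_mat :: "real^'n::finite \<Rightarrow> real^'n^'n" where
  "diag_mat lam = (\<chi> i j. if i = j then lam $ i else 0)"

(* lam is the vector of eigenvalues (with multiplicity, in some order) of the symmetric matrix A *)
definition eigvals :: "real^'n::finite^'n \<Rightarrow> real^'n \<Rightarrow> bool" where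
  "eigvals A lam \<longleftrightarrow> (\<exists>P. orthogonal_matrix P \<and> A = P ** diag_mat lam ** transpose P)"

definition Wmat :: "(real^'n::finite \<Rightarrow> real) \<Rightarrow> real^'n \<Rightarrow> real^'n^'n" where
  "Wmat u x = (let n = real CARD('n);
      lap = (\<Sum>i\<in>UNIV. pd i (pd i u) x);
      grad2 = (\<Sum>i\<in>UNIV. (pd i u x)^2)
    in (\<chi> i j. (n - 2) * pd i (pd j u) x - n * pd i u x * pd j u x / u x
               + (if i = j then lap + grad2 / u x else 0)))"

end

theory Submission
  imports Defs
begin


lemma second_deriv_max:
  fixes G G' :: "real \<Rightarrow> real"
  assumes d: "d > 0"
    and D1: "\<And>t. \<bar>t\<bar> < d \<Longrightarrow> (G has_real_derivative G' t) (at t)"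
    and D2: "(G' has_real_derivative G2) (at 0)"
    and mx: "\<And>t. \<bar>t\<bar> < d \<Longrightarrow> G t \<le> G 0"
  shows "G' 0 = 0" and "G2 \<le> 0"
proof -
  show G0: "G' 0 = 0"
    by (rule DERIV_local_max[OF D1[of 0] d]) (use d mx in auto)
  show "G2 \<le> 0"
  proof (rule ccontr)
    assume "\<not> G2 \<le> 0"
    then have "G2 > 0" by simp
    from DERIV_pos_inc_right[OF D2 this] obtain e where e: "e > 0"
      and he: "\<And>h. h > 0 \<Longrightarrow> h < e \<Longrightarrow> G' 0 < G' (0 + h)" by blast
    define t where "t = min e d / 2"
    have t: "0 < t" "t < e" "t < d" using e d by (auto simp: t_def)
    obtain z where z: "0 < z" "z < t" "G t - G 0 = (t - 0) * G' z"
      using MVT2[of 0 t G G'] t D1 by force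
    have "G' z > 0" using he[of z] z t G0 by simp
    then have "t * G' z > 0" using z t by simp
    then have "G t > G 0" using z by simp
    with mx[of t] t show False by simp
  qed
qed

lemma line_deriv:
  fixes f :: "real^'n::finite \<Rightarrow> real"
  assumes "f differentiable (at (x + t *\<^sub>R axis i 1))"
  shows "((\<lambda>s. f (x + s *\<^sub>R axis i 1)) has_real_derivative pd i f (x + t *\<^sub>R axis i 1)) (at t)"
proof -
  let ?F = "frechet_derivative f (at (x + t *\<^sub>R axis i 1))"
  have hf: "(f has_derivative ?F) (at (x + t *\<^sub>R axis i 1))"
    using assms frechet_derivative_works by blast
  have lin: "linear ?F" using hf has_derivative_linear by blast
  have hl: "((\<lambda>s. x + s *\<^sub>R axis i 1) has_derivative (\<lambda>h. h *\<^sub>R axis i 1)) (at t)"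
    by (auto intro!: derivative_eq_intros)
  have "((\<lambda>s. f (x + s *\<^sub>R axis i 1)) has_derivative (\<lambda>h. ?F (h *\<^sub>R axis i 1))) (at t)"
    using diff_chain_at[OF hl hf] by (simp add: o_def)
  moreover have "(\<lambda>h. ?F (h *\<^sub>R axis i 1)) = (\<lambda>h. h * pd i f (x + t *\<^sub>R axis i 1))"
    using linear_scale[OF lin] by (auto simp: pd_def)
  ultimately show ?thesis by (simp add: has_field_derivative_def mult.commute[of _ "pd i f _"])
qed



lemma sigma1: "sigma 1 (lam::real^'n::finite) = (\<Sum>i\<in>UNIV. lam $ i)"
proof -
  have e: "{S::'n set. card S = 1} = (\<lambda>i. {i}) ` UNIV"
    by (auto simp: card_1_singleton_iff)
  show ?thesis unfolding sigma_def e
    by (subst sum.reindex) (auto simp: inj_on_def)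
qed

lemma sigma2:
  "(sigma 1 (lam::real^'n::finite))^2 = (\<Sum>i\<in>UNIV. (lam $ i)^2) + 2 * sigma 2 lam"
proof -
  define P where "P = {(i::'n, j). i \<noteq> j}"
  define h where "h = (\<lambda>(i, j). lam $ i * lam $ j)"
  have "(sigma 1 lam)^2 = (\<Sum>i\<in>UNIV. \<Sum>j\<in>UNIV. lam $ i * lam $ j)"
    unfolding sigma1 power2_eq_square sum_product by simp
  also have "\<dots> = (\<Sum>p\<in>UNIV. h p)"
    by (simp add: h_def sum.cartesian_product)
  also have "\<dots> = (\<Sum>p\<in>{(i,j). i = j}. h p) + (\<Sum>p\<in>P. h p)"
  proof -
    have "UNIV = {(i::'n,j). i = j} \<union> P" by (auto simp: P_def)
    moreover have "{(i::'n,j). i = j} \<inter> P = {}" by (auto simp: P_def)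
    ultimately show ?thesis by (metis finite sum.union_disjoint)
  qed
  also have "(\<Sum>p\<in>{(i,j). i = j}. h p) = (\<Sum>i\<in>UNIV. (lam $ i)^2)"
  proof -
    have "{(i::'n,j). i = j} = (\<lambda>i. (i,i)) ` UNIV" by auto
    then show ?thesis by (simp add: sum.reindex inj_on_def h_def power2_eq_square)
  qed
  also have "(\<Sum>p\<in>P. h p) = 2 * sigma 2 lam"
  proof -
    have g: "(\<Sum>T\<in>{S::'n set. card S = 2}. sum h {p \<in> P. (\<lambda>(i,j). {i,j}) p = T}) = sum h P"
      by (rule sum.group) (auto simp: P_def)
    have fib: "sum h {p \<in> P. (\<lambda>(i,j). {i,j}) p = T} = 2 * (\<Prod>i\<in>T. lam $ i)"
      if "card T = 2" for T :: "'n set"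
    proof -
      obtain a b where ab: "T = {a, b}" "a \<noteq> b" using \<open>card T = 2\<close> card_2_iff by metis
      have "{p \<in> P. (\<lambda>(i,j). {i,j}) p = T} = {(a,b), (b,a)}"
        using ab by (auto simp: P_def doubleton_eq_iff)
      then show ?thesis using ab by (simp add: h_def)
    qed
    show ?thesis using g fib by (simp add: sigma_def sum_distrib_left)
  qed
  finally show ?thesis .
qed

lemma trace_eig:
  assumes "eigvals (A::real^'n::finite^'n) lam"
  shows "trace A = (\<Sum>i\<in>UNIV. lam $ i)"
proof -
  obtain P where P: "orthogonal_matrix P" "A = P ** diag_mat lam ** transpose P"
    using assms eigvals_def by blast
  have "trace A = trace (P ** (diag_mat lam ** transpose P))"
    by (simp add: P matrix_mul_assoc)
  also have "\<dots> = trace ((diag_mat lam ** transpose P) ** P)" by (rule trace_mul_sym)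
  also have "\<dots> = trace (diag_mat lam)"
    using P(1) by (simp add: matrix_mul_assoc[symmetric] orthogonal_matrix)
  also have "\<dots> = (\<Sum>i\<in>UNIV. lam $ i)" by (simp add: trace_def diag_mat_def)
  finally show ?thesis .
qed

lemma trace_W:
  "trace (Wmat (u::real^'n::finite \<Rightarrow> real) x) = 2 * (real CARD('n) - 1) * (\<Sum>i\<in>UNIV. pd i (pd i u) x)"
proof -
  let ?n = "real CARD('n)"
  let ?L = "\<Sum>i\<in>UNIV. pd i (pd i u) x"
  let ?g = "\<Sum>i\<in>UNIV. (pd i u x)^2"
  have "trace (Wmat u x) = (\<Sum>i\<in>UNIV. (?n - 2) * pd i (pd i u) x - ?n * (pd i u x)^2 / u x + (?L + ?g / u x))"
    by (simp add: trace_def Wmat_def Let_def power2_eq_square mult.assoc)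
  also have "\<dots> = (?n - 2) * ?L - ?n * ?g / u x + ?n * (?L + ?g / u x)"
    by (simp add: sum.distrib sum_subtractf sum_distrib_left sum_divide_distrib)
  also have "\<dots> = 2 * (?n - 1) * ?L" by (simp add: algebra_simps)
  finally show ?thesis .
qed



lemma sigma_bound:
  assumes "(lam::real^'n::finite) \<in> Gamma k" "1 \<le> k"
  shows "sigma 1 lam > 0" "sigma k lam \<le> 2 ^ CARD('n) * (sigma 1 lam)^k"
proof -
  let ?s = "sigma 1 lam"
  show s1: "?s > 0" using assms by (auto simp: Gamma_def)
  have cardN: "real (card {S::'n set. card S = k}) \<le> 2 ^ CARD('n)"
  proof -
    have "card {S::'n set. card S = k} \<le> card (Pow (UNIV::'n set))"
      by (rule card_mono) auto
    then show ?thesis by (simp add: card_Pow)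
  qed
  show "sigma k lam \<le> 2 ^ CARD('n) * ?s^k"
  proof (cases "k = 1")
    case True
    have "(1::real) \<le> 2 ^ CARD('n)" by simp
    then show ?thesis using True s1 by simp
  next
    case False
    then have "sigma 2 lam > 0" using assms by (auto simp: Gamma_def)
    then have sq: "(\<Sum>i\<in>UNIV. (lam $ i)^2) < ?s^2" using sigma2[of lam] by linarith
    have bi: "\<bar>lam $ i\<bar> \<le> ?s" for i
    proof -
      have "(lam $ i)^2 \<le> (\<Sum>i\<in>UNIV. (lam $ i)^2)"
        by (rule member_le_sum) auto
      then have "(lam $ i)^2 \<le> ?s^2" using sq by linarith
      then show ?thesis using s1 by (metis abs_le_square_iff abs_of_pos)
    qed
    have "sigma k lam \<le> (\<Sum>S\<in>{S::'n set. card S = k}. ?s ^ k)"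
      unfolding sigma_def[of k]
    proof (rule sum_mono)
      fix S :: "'n set" assume "S \<in> {S. card S = k}"
      then have cS: "card S = k" by simp
      have "(\<Prod>i\<in>S. lam $ i) \<le> \<bar>\<Prod>i\<in>S. lam $ i\<bar>" by simp
      also have "\<dots> = (\<Prod>i\<in>S. \<bar>lam $ i\<bar>)" by (simp add: abs_prod)
      also have "\<dots> \<le> (\<Prod>i\<in>S. ?s)" by (rule prod_mono) (metis abs_ge_zero bi)
      also have "\<dots> = ?s ^ k" using cS by simp
      finally show "(\<Prod>i\<in>S. lam $ i) \<le> ?s ^ k" .
    qed
    also have "\<dots> = real (card {S::'n set. card S = k}) * ?s ^ k" by simp
    also have "\<dots> \<le> 2 ^ CARD('n) * ?s ^ k"
      using cardN s1 by (intro mult_right_mono) auto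
    finally show ?thesis .
  qed
qed



lemma lap_lower:
  fixes u :: "real^'n::finite \<Rightarrow> real"
  assumes k: "1 \<le> k" and e: "eigvals (Wmat u x) lam" and g: "lam \<in> Gamma k"
  shows "sigma k lam powr (1 / real k) \<le> 2 ^ CARD('n) * (2 * (real CARD('n) - 1) * (\<Sum>i\<in>UNIV. pd i (pd i u) x))"
proof -
  let ?s = "sigma 1 lam"
  have s1: "?s > 0" and sb: "sigma k lam \<le> 2 ^ CARD('n) * ?s^k" using sigma_bound[OF g k] by auto
  have sk: "sigma k lam > 0" using g k by (auto simp: Gamma_def)
  have tr: "?s = 2 * (real CARD('n) - 1) * (\<Sum>i\<in>UNIV. pd i (pd i u) x)"
    using trace_eig[OF e] trace_W[of u x] sigma1[of lam] by simp
  have "sigma k lam powr (1 / real k) \<le> (2 ^ CARD('n) * ?s^k) powr (1 / real k)"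
    using sk sb by (intro powr_mono2) auto
  also have "\<dots> = (2 ^ CARD('n)) powr (1 / real k) * (?s^k) powr (1 / real k)"
    using s1 by (simp add: powr_mult)
  also have "(?s^k) powr (1 / real k) = ?s"
  proof -
    have "(?s^k) powr (1 / real k) = (?s powr real k) powr (1 / real k)"
      using s1 by (simp add: powr_realpow)
    also have "\<dots> = ?s" using k s1 by (simp add: powr_powr)
    finally show ?thesis .
  qed
  also have "(2 ^ CARD('n)) powr (1 / real k) \<le> (2 ^ CARD('n) :: real) powr 1"
    using k by (intro powr_mono) auto
  also have "(2 ^ CARD('n) :: real) powr 1 = 2 ^ CARD('n)" by simp
  finally show ?thesis using s1 tr by (simp add: mult_right_mono)
qed



lemma alg2:
  fixes a s b e w :: real and m :: nat
  assumes a: "a > 0" and s: "s > 0" and m: "m \<ge> 1"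
    and h1: "b * s^m + a * (real m * s^(m-1) * w) = 0"
    and h2: "e * s^m + 2 * b * (real m * s^(m-1) * w)
             + a * (real m * (real (m-1) * s^(m-1-1) * w^2 + s^(m-1) * (-2))) \<le> 0"
  shows "e \<le> a * ((real m ^ 2 + real m) * w^2 / s^2 + 2 * real m / s)"
proof -
  define P where "P = s^m"
  have P: "P > 0" using s by (simp add: P_def)
  have e1: "s^(m-1) = P / s" using s m by (simp add: P_def power_diff)
  have e2: "real (m-1) * s^(m-1-1) = real (m-1) * (P / s^2)"
  proof (cases "m = 1")
    case True then show ?thesis by simp
  next
    case False
    then have "m \<ge> 2" using m by simp
    then have "s^(m-1-1) = P / s^2" using s by (simp add: P_def power_diff diff_diff_left power2_eq_square)
    then show ?thesis by simp
  qed
  have rm: "real (m-1) = real m - 1" using m by simp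
  have "P * (b * s + a * real m * w) = 0"
    using h1 s unfolding e1 P_def[symmetric] by (simp add: field_simps)
  then have "b * s + a * real m * w = 0" using P by simp
  then have b: "b = - a * real m * w / s" using s by (simp add: field_simps)
  have "e * P + 2 * b * (real m * (P / s) * w)
        + a * (real m * ((real m - 1) * (P / s^2) * w^2 + (P / s) * (-2))) \<le> 0"
    using h2 unfolding e1 P_def[symmetric] by (metis e2 rm mult.assoc)
  moreover have "e * P + 2 * b * (real m * (P / s) * w)
        + a * (real m * ((real m - 1) * (P / s^2) * w^2 + (P / s) * (-2)))
     = P * (e - a * ((real m ^ 2 + real m) * w^2 / s^2 + 2 * real m / s))"
    unfolding b using s by (simp add: field_simps power2_eq_square)
  ultimately have "P * (e - a * ((real m ^ 2 + real m) * w^2 / s^2 + 2 * real m / s)) \<le> 0"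
    by simp
  then show ?thesis using P by (simp add: mult_le_0_iff)
qed



lemma norm_line:
  fixes y :: "real^'n::finite"
  shows "(norm (y + t *\<^sub>R axis i 1))^2 = (norm y)^2 + 2 * t * y $ i + t^2"
  unfolding power2_norm_eq_inner by (simp add: inner_add_left inner_add_right inner_axis inner_axis' inner_axis_axis algebra_simps power2_eq_square)

lemma pointwise:
  fixes u :: "real^'n::finite \<Rightarrow> real" and x0 x1 :: "real^'n"
  assumes R: "R > 0" and cb: "cball x0 R \<subseteq> \<Omega>"
    and du: "\<And>x. x \<in> \<Omega> \<Longrightarrow> u differentiable (at x)"
    and dpu: "\<And>x i. x \<in> \<Omega> \<Longrightarrow> pd i u differentiable (at x)"
    and m1: "m \<ge> 1"
    and x1: "x1 \<in> cball x0 R" and mx: "\<And>y. y \<in> cball x0 R \<Longrightarrow> u y * (R^2 - (norm (y - x0))^2) ^ m \<le> u x1 * (R^2 - (norm (x1 - x0))^2) ^ m"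
    and a: "u x1 > 0" and s: "R^2 - (norm (x1 - x0))^2 > 0"
  shows "pd i (pd i u) x1 \<le> u x1 * ((real m ^ 2 + real m) * (-2 * (x1 - x0) $ i)^2 / (R^2 - (norm (x1 - x0))^2)^2
            + 2 * real m / (R^2 - (norm (x1 - x0))^2))"
proof -
  define y where "y = x1 - x0"
  define s where "s = R^2 - (norm y)^2"
  define e where "e = (axis i 1 :: real^'n)"
  define St where "St = (\<lambda>t. R^2 - (norm y)^2 - 2*t*y$i - t^2)"
  have Sline: "R^2 - (norm (x1 + t *\<^sub>R e - x0))^2 = St t" for t
  proof -
    have "x1 + t *\<^sub>R e - x0 = y + t *\<^sub>R axis i 1" by (simp add: y_def e_def algebra_simps)
    then show ?thesis using norm_line[of y t i] by (simp add: St_def)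
  qed
  have ny: "norm y < R"
  proof -
    have "(norm y)^2 < R^2" using s by (simp add: y_def)
    then show ?thesis using R by (simp add: power_less_imp_less_base less_imp_le)
  qed
  define d where "d = R - norm y"
  have d: "d > 0" using ny by (simp add: d_def)
  have inball: "x1 + t *\<^sub>R e \<in> cball x0 R" if "\<bar>t\<bar> < d" for t
  proof -
    have "dist x0 (x1 + t *\<^sub>R e) = norm (y + t *\<^sub>R e)"
      by (simp add: dist_norm y_def norm_minus_commute algebra_simps)
    also have "\<dots> \<le> norm y + norm (t *\<^sub>R e)" by (rule norm_triangle_ineq)
    also have "\<dots> = norm y + \<bar>t\<bar>" by (simp add: e_def)
    finally show ?thesis using that by (simp add: d_def)
  qed
  have inO: "x1 + t *\<^sub>R e \<in> \<Omega>" if "\<bar>t\<bar> < d" for t using inball[OF that] cb by auto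
  define G where "G = (\<lambda>t. u (x1 + t *\<^sub>R e) * St t ^ m)"
  define G' where "G' = (\<lambda>t. pd i u (x1 + t *\<^sub>R e) * St t ^ m
      + u (x1 + t *\<^sub>R e) * (real m * St t ^ (m - 1) * (- 2 * y $ i - 2 * t)))"
  have hq: "((\<lambda>t. St t ^ m) has_real_derivative real m * St t ^ (m - 1) * (- 2 * y $ i - 2 * t)) (at t)" for t
    unfolding St_def by (auto intro!: derivative_eq_intros simp: algebra_simps)
  have D1: "(G has_real_derivative G' t) (at t)" if "\<bar>t\<bar> < d" for t
  proof -
    have hu: "((\<lambda>s. u (x1 + s *\<^sub>R e)) has_real_derivative pd i u (x1 + t *\<^sub>R e)) (at t)"
      unfolding e_def by (rule line_deriv) (use du inO[OF that] e_def in auto)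
    show ?thesis using DERIV_mult[OF hu hq[of t]] by (simp add: G_def G'_def algebra_simps)
  qed
  have St0: "St 0 = s" by (simp add: St_def s_def)
  have hq2: "((\<lambda>t. real m * St t ^ (m - 1) * (- 2 * y $ i - 2 * t)) has_real_derivative
      real m * (real (m-1) * s ^ (m-1-1) * (-2*y$i)^2 + s ^ (m-1) * (-2))) (at 0)"
    unfolding St0[symmetric] unfolding St_def
    by (auto intro!: derivative_eq_intros simp: algebra_simps power2_eq_square)
  have hu0: "((\<lambda>s. u (x1 + s *\<^sub>R e)) has_real_derivative pd i u x1) (at 0)"
    using line_deriv[of u x1 0 i] du[of x1] cb x1 by (simp add: e_def subset_iff)
  have hpu: "((\<lambda>s. pd i u (x1 + s *\<^sub>R e)) has_real_derivative pd i (pd i u) x1) (at 0)"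
    using line_deriv[of "pd i u" x1 0 i] dpu[of x1] cb x1 by (simp add: e_def subset_iff)
  have D2: "(G' has_real_derivative
      (pd i (pd i u) x1 * s ^ m + real m * s ^ (m - 1) * (- 2 * y $ i) * pd i u x1
       + (pd i u x1 * (real m * s ^ (m - 1) * (- 2 * y $ i))
       + real m * (real (m-1) * s ^ (m-1-1) * (-2*y$i)^2 + s ^ (m-1) * (-2)) * u x1))) (at 0)"
    using DERIV_add[OF DERIV_mult[OF hpu hq[of 0]] DERIV_mult[OF hu0 hq2]]
    unfolding G'_def St0 by simp
  have mxG: "G t \<le> G 0" if "\<bar>t\<bar> < d" for t
    using mx[OF inball[OF that]] Sline[of t] Sline[of 0] by (simp add: G_def)
  have r1: "G' 0 = 0" and r2: "pd i (pd i u) x1 * s ^ m + real m * s ^ (m - 1) * (- 2 * y $ i) * pd i u x1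
       + (pd i u x1 * (real m * s ^ (m - 1) * (- 2 * y $ i))
       + real m * (real (m-1) * s ^ (m-1-1) * (-2*y$i)^2 + s ^ (m-1) * (-2)) * u x1) \<le> 0"
    using second_deriv_max[OF d D1 D2 mxG] by auto
  have "pd i (pd i u) x1 \<le> u x1 * ((real m ^ 2 + real m) * (-2 * y $ i)^2 / s^2 + 2 * real m / s)"
  proof (rule alg2[OF a _ m1])
    show "0 < s" using s by (simp add: s_def y_def)
    show "pd i u x1 * s ^ m + u x1 * (real m * s ^ (m - 1) * (-2 * y $ i)) = 0"
      using r1 by (simp add: G'_def St0)
    show "pd i (pd i u) x1 * s ^ m + 2 * pd i u x1 * (real m * s ^ (m - 1) * (-2 * y $ i)) +
      u x1 * (real m * (real (m - 1) * s ^ (m - 1 - 1) * (-2 * y $ i)^2 + s ^ (m - 1) * - 2)) \<le> 0"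
      using r2 by (simp add: algebra_simps)
  qed
  then show ?thesis by (simp add: s_def y_def)
qed



lemma comparison:
  fixes u :: "real^'n::finite \<Rightarrow> real" and x0 :: "real^'n"
  assumes n3: "CARD('n) \<ge> 3" and R: "R > 0" and cb: "cball x0 R \<subseteq> \<Omega>"
    and du: "\<And>x. x \<in> \<Omega> \<Longrightarrow> u differentiable (at x)"
    and dpu: "\<And>x i. x \<in> \<Omega> \<Longrightarrow> pd i u differentiable (at x)"
    and pos: "\<And>x. x \<in> \<Omega> \<Longrightarrow> u x > 0"
    and c: "c > 0"
    and lap: "\<And>x. x \<in> \<Omega> \<Longrightarrow> c * u x powr (1 + 4 / (real CARD('n) - 2)) \<le> (\<Sum>i\<in>UNIV. pd i (pd i u) x)"
  shows "u x0 powr (4 / (real CARD('n) - 2))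
     \<le> (4 * ((real (CARD('n) - 2))^2 + real (CARD('n) - 2)) + 2 * real (CARD('n) - 2) * real CARD('n)) / (c * R^2)"
proof -
  define n where "n = CARD('n)"
  define m where "m = n - 2"
  define q where "q = 4 / (real n - 2)"
  define K where "K = 4 * ((real m)^2 + real m) + 2 * real m * real n"
  have m1: "m \<ge> 1" and rm: "real m = real n - 2" using n3 by (auto simp: m_def n_def)
  have q: "q > 0" using n3 by (simp add: q_def n_def)
  have n2: "real n - 2 > 0" using n3 by (simp add: n_def)
  have mq: "real m * q = 4" using n2 unfolding q_def rm by (simp add: field_simps)
  define S where "S = (\<lambda>x::real^'n. R^2 - (norm (x - x0))^2)"
  define F where "F = (\<lambda>x. u x * S x ^ m)"
  have contu: "continuous_on (cball x0 R) u"
    using cb du by (meson continuous_at_imp_continuous_on differentiable_imp_continuous_within subsetD)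
  have contF: "continuous_on (cball x0 R) F" unfolding F_def S_def by (intro continuous_intros contu)
  obtain x1 where x1: "x1 \<in> cball x0 R" and mx: "\<And>y. y \<in> cball x0 R \<Longrightarrow> F y \<le> F x1"
    using continuous_attains_sup[OF compact_cball _ contF] R by (metis centre_in_cball empty_iff less_imp_le)
  have Sge: "S x \<ge> 0" if "x \<in> cball x0 R" for x
  proof -
    have "norm (x - x0) \<le> R" using that by (simp add: dist_norm norm_minus_commute)
    then have "(norm (x - x0))^2 \<le> R^2" by (simp add: power_mono)
    then show ?thesis by (simp add: S_def)
  qed
  have x0O: "x0 \<in> \<Omega>" using cb R by auto
  have x1O: "x1 \<in> \<Omega>" using cb x1 by auto
  have Fx0: "F x0 = u x0 * (R^2)^m" by (simp add: F_def S_def)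
  have Fx0pos: "F x0 > 0" using pos[OF x0O] R Fx0 by simp
  have F1pos: "F x1 > 0" using mx[of x0] Fx0pos R by auto
  define a where "a = u x1"
  have a: "a > 0" using pos[OF x1O] by (simp add: a_def)
  define s where "s = S x1"
  have s: "s > 0"
  proof -
    have "s \<ge> 0" using Sge[OF x1] by (simp add: s_def)
    moreover have "s \<noteq> 0" using F1pos m1 by (auto simp: F_def s_def zero_power)
    ultimately show ?thesis by simp
  qed
  have s_le: "s \<le> R^2" by (simp add: s_def S_def)
  define y where "y = x1 - x0"
  have ny: "(norm y)^2 \<le> R^2" using s_le s by (simp add: s_def S_def y_def)
  have pw: "pd i (pd i u) x1 \<le> a * ((real m ^ 2 + real m) * (-2 * y $ i)^2 / s^2 + 2 * real m / s)" for i
    using pointwise[OF R cb du dpu m1 x1, of i] mx a s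
    unfolding a_def s_def y_def F_def S_def by blast
  have "(\<Sum>i\<in>UNIV. pd i (pd i u) x1) \<le> (\<Sum>i\<in>UNIV. a * ((real m ^ 2 + real m) * (-2 * y $ i)^2 / s^2 + 2 * real m / s))"
    by (rule sum_mono) (rule pw)
  also have "\<dots> = a * (4 * (real m ^ 2 + real m) * (\<Sum>i\<in>UNIV. (y $ i)^2) / s^2 + 2 * real m * real n / s)"
  proof -
    let ?C = "real m ^ 2 + real m"
    have eqi: "a * (?C * (-2 * y $ i)^2 / s^2 + 2 * real m / s) = (4 * a * ?C / s^2) * (y $ i)^2 + a * (2 * real m / s)" for i
      by (simp add: field_simps power2_eq_square)
    have "(\<Sum>i\<in>UNIV. a * (?C * (-2 * y $ i)^2 / s^2 + 2 * real m / s))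
       = (4 * a * ?C / s^2) * (\<Sum>i\<in>UNIV. (y $ i)^2) + real n * (a * (2 * real m / s))"
      unfolding eqi by (simp add: sum.distrib sum_distrib_left n_def)
    then show ?thesis by (simp add: field_simps)
  qed
  also have "(\<Sum>i\<in>UNIV. (y $ i)^2) = (norm y)^2"
    unfolding power2_norm_eq_inner by (simp add: inner_vec_def power2_eq_square)
  also have "a * (4 * (real m ^ 2 + real m) * (norm y)^2 / s^2 + 2 * real m * real n / s) \<le> a * K * R^2 / s^2"
  proof -
    have "4 * (real m ^ 2 + real m) * (norm y)^2 / s^2 \<le> 4 * (real m ^ 2 + real m) * R^2 / s^2"
      using ny s by (intro divide_right_mono mult_left_mono) auto
    moreover have "2 * real m * real n / s \<le> 2 * real m * real n * R^2 / s^2"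
    proof -
      have "2 * real m * real n / s = 2 * real m * real n * s / s^2" using s by (simp add: power2_eq_square)
      also have "\<dots> \<le> 2 * real m * real n * R^2 / s^2"
        using s_le s by (intro divide_right_mono mult_left_mono) auto
      finally show ?thesis .
    qed
    ultimately have "4 * (real m ^ 2 + real m) * (norm y)^2 / s^2 + 2 * real m * real n / s
       \<le> 4 * (real m ^ 2 + real m) * R^2 / s^2 + 2 * real m * real n * R^2 / s^2" by (rule add_mono)
    also have "\<dots> = K * R^2 / s^2" by (simp add: K_def add_divide_distrib distrib_right)
    finally have "a * (4 * (real m ^ 2 + real m) * (norm y)^2 / s^2 + 2 * real m * real n / s)
       \<le> a * (K * R^2 / s^2)" using a by (intro mult_left_mono) auto
    then show ?thesis by simp
  qed
  finally have L: "(\<Sum>i\<in>UNIV. pd i (pd i u) x1) \<le> a * K * R^2 / s^2" .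
  have "c * (a * a powr q) \<le> a * K * R^2 / s^2"
    using lap[OF x1O] L a by (simp add: a_def q_def n_def powr_add)
  then have "a * (c * a powr q) \<le> a * (K * R^2 / s^2)" by (simp add: mult_ac)
  then have "c * a powr q \<le> K * R^2 / s^2" using a by (rule mult_left_le_imp_le)
  then have cq: "c * a powr q * s^2 \<le> K * R^2" using s by (simp add: field_simps)
  have "F x1 powr q = a powr q * s^4"
  proof -
    have "F x1 powr q = a powr q * (s ^ m) powr q" using a s by (simp add: F_def a_def s_def powr_mult)
    also have "(s ^ m) powr q = s powr (real m * q)" using s by (simp add: powr_realpow[symmetric] powr_powr)
    also have "\<dots> = s^4" using s by (simp add: mq powr_realpow)
    finally show ?thesis .
  qed
  also have "\<dots> = (c * a powr q * s^2) * s^2 / c" using c by (simp add: field_simps)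
  also have "\<dots> \<le> (K * R^2) * (R^2)^2 / c"
  proof -
    have K0: "K \<ge> 0" by (simp add: K_def)
    have s2: "s^2 \<le> (R^2)^2" using s s_le by (intro power_mono) auto
    then have "(c * a powr q * s^2) * s^2 \<le> (K * R^2) * (R^2)^2"
      using mult_mono[OF cq s2] K0 by simp
    then show ?thesis using c by (intro divide_right_mono) auto
  qed
  finally have F1: "F x1 powr q \<le> K * R^2 * (R^2)^2 / c" .
  have R8: "((R^2)^m) powr q = R^8"
  proof -
    have "((R^2)^m) powr q = (R powr real (2 * m)) powr q"
      using R powr_realpow[of R "2 * m"] by (simp add: power_mult[symmetric])
    also have "\<dots> = R powr (real (2 * m) * q)" by (simp add: powr_powr)
    also have "real (2 * m) * q = real (8::nat)" using mq by (simp add: mult.commute)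
    also have "R powr real (8::nat) = R^8" using R by (rule powr_realpow)
    finally show ?thesis .
  qed
  have "F x0 powr q = u x0 powr q * R^8"
    using Fx0 pos[OF x0O] R R8 by (simp add: powr_mult)
  moreover have "F x0 powr q \<le> F x1 powr q"
    using mx[of x0] R Fx0pos q by (intro powr_mono2) auto
  ultimately have h8: "u x0 powr q * R^8 \<le> K * R^2 * (R^2)^2 / c" using F1 by simp
  have "(u x0 powr q * (c * R^2)) * R^6 = (u x0 powr q * R^8) * c" by (simp add: algebra_simps power_add[symmetric])
  also have "\<dots> \<le> (K * R^2 * (R^2)^2 / c) * c" using h8 c by (intro mult_right_mono) auto
  also have "\<dots> = K * R^6" using c by (simp add: power_add[symmetric] power_mult[symmetric] algebra_simps)
  finally have "(u x0 powr q * (c * R^2)) * R^6 \<le> K * R^6" .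
  then have "u x0 powr q * (c * R^2) \<le> K" using R by simp
  then have "u x0 powr q \<le> K / (c * R^2)" using R c by (simp add: pos_le_divide_eq)
  then show ?thesis unfolding q_def K_def m_def n_def .
qed



theorem corollary2p7:
  fixes \<Omega> :: "(real^'n) set" and u :: "real^'n \<Rightarrow> real" and k :: nat
  assumes "CARD('n) \<ge> 3"
    and "1 \<le> k" and "k \<le> CARD('n)"
    and "open \<Omega>" and "connected \<Omega>" and "\<Omega> \<noteq> {}" and "\<not> bounded \<Omega>"
    and "compact (frontier \<Omega>)" and "smooth_boundary \<Omega>"
    and "smooth_on u \<Omega>" and "\<forall>x\<in>\<Omega>. u x > 0"
    and "\<forall>x\<in>\<Omega>. \<exists>lam. eigvals (Wmat u x) lam \<and> lam \<in> Gamma k \<and>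
           sigma k lam powr (1 / real k)
             = (real CARD('n) - 2) / 2 * u x powr ((real CARD('n) + 2) / (real CARD('n) - 2))"
  shows "(u \<longlongrightarrow> 0) (inf at_infinity (principal \<Omega>))"
proof -
  note n3 = assms(1) and k1 = assms(2) and sm = assms(10) and pos = assms(11) and eq = assms(12)
  define n where "n = real CARD('n)"
  define q where "q = 4 / (n - 2)"
  have n2: "n - 2 > 0" using n3 by (simp add: n_def)
  have q: "q > 0" using n2 by (simp add: q_def)
  have pq: "(n + 2) / (n - 2) = 1 + q" using n2 by (simp add: q_def field_simps)
  define c where "c = ((n - 2) / 2) / (2 ^ CARD('n) * (2 * (n - 1)))"
  have c: "c > 0" using n2 by (simp add: c_def)
  have du: "\<And>x. x \<in> \<Omega> \<Longrightarrow> u differentiable (at x)"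
    using sm unfolding smooth_on_def by (metis iter_pd.simps(1))
  have dpu: "\<And>x i. x \<in> \<Omega> \<Longrightarrow> pd i u differentiable (at x)"
    using sm unfolding smooth_on_def by (metis iter_pd.simps)
  have lap: "c * u x powr (1 + 4 / (real CARD('n) - 2)) \<le> (\<Sum>i\<in>UNIV. pd i (pd i u) x)"
    if x: "x \<in> \<Omega>" for x
  proof -
    obtain lam where e: "eigvals (Wmat u x) lam" and g: "lam \<in> Gamma k"
      and sk: "sigma k lam powr (1 / real k) = (n - 2) / 2 * u x powr (1 + q)"
      using eq x pq n_def by metis
    have "(n - 2) / 2 * u x powr (1 + q) \<le> 2 ^ CARD('n) * (2 * (n - 1) * (\<Sum>i\<in>UNIV. pd i (pd i u) x))"
      using lap_lower[OF k1 e g] sk by (simp add: n_def)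
    then have "c * u x powr (1 + q) \<le> (\<Sum>i\<in>UNIV. pd i (pd i u) x)"
      using n2 by (simp add: c_def field_simps)
    then show ?thesis by (simp add: q_def n_def)
  qed
  define K where "K = (4 * ((real (CARD('n) - 2))^2 + real (CARD('n) - 2)) + 2 * real (CARD('n) - 2) * real CARD('n))"
  have K0: "K \<ge> 0" by (simp add: K_def)
  have bnd: "u x0 powr q \<le> K / (c * R^2)" if "R > 0" "cball x0 R \<subseteq> \<Omega>" for x0 R
    using comparison[OF n3 that du dpu _ c lap] pos by (simp add: q_def n_def K_def)
  obtain M where M: "M \<ge> 0" "\<And>x. x \<in> frontier \<Omega> \<Longrightarrow> norm x \<le> M"
    using compact_imp_bounded[OF assms(8)] unfolding bounded_iff
    by (metis norm_ge_zero order.trans)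
  have ball_in: "cball x0 (norm x0 - M - 1) \<subseteq> \<Omega>" if "x0 \<in> \<Omega>" "norm x0 > M + 1" for x0
  proof (rule ccontr)
    assume "\<not> ?thesis"
    then have "cball x0 (norm x0 - M - 1) - \<Omega> \<noteq> {}" by auto
    moreover have "cball x0 (norm x0 - M - 1) \<inter> \<Omega> \<noteq> {}"
    proof -
      have "x0 \<in> cball x0 (norm x0 - M - 1)" using that by simp
      then show ?thesis using that by blast
    qed
    ultimately have "cball x0 (norm x0 - M - 1) \<inter> frontier \<Omega> \<noteq> {}"
      using connected_Int_frontier[OF connected_cball] by blast
    then obtain z where z: "z \<in> frontier \<Omega>" "dist x0 z \<le> norm x0 - M - 1" by auto
    have "norm x0 \<le> norm z + dist x0 z" by (metis dist_norm norm_triangle_sub)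
    then show False using z M(2)[OF z(1)] by linarith
  qed
  show ?thesis
  proof (rule tendstoI)
    fix eps :: real assume eps: "eps > 0"
    define T where "T = sqrt (K / (c * eps powr q)) + 1"
    have T: "T > 0" "T^2 > K / (c * eps powr q)"
    proof -
      have "c * eps powr q > 0" using c eps by simp
      then have nn: "K / (c * eps powr q) \<ge> 0" using K0 by simp
      then have sq: "sqrt (K / (c * eps powr q)) \<ge> 0" by simp
      then show "T > 0" unfolding T_def by linarith
      from nn have "K / (c * eps powr q) = (sqrt (K / (c * eps powr q)))^2" by simp
      also have "\<dots> < T^2" using sq unfolding T_def by (intro power_strict_mono) auto
      finally show "T^2 > K / (c * eps powr q)" .
    qed
    show "\<forall>\<^sub>F x in inf at_infinity (principal \<Omega>). dist (u x) 0 < eps"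
      unfolding eventually_inf_principal eventually_at_infinity
    proof (intro exI allI impI)
      fix x0 :: "real^'n" assume a: "M + 1 + T \<le> norm x0" and x0: "x0 \<in> \<Omega>"
      define R where "R = norm x0 - M - 1"
      have R: "R > 0" "R \<ge> T" using a T by (auto simp: R_def)
      have ub: "u x0 powr q \<le> K / (c * R^2)" using bnd[OF R(1)] ball_in[OF x0] a T by (simp add: R_def)
      have "T^2 \<le> R^2" using R T by (intro power_mono) auto
      then have "K / (c * eps powr q) < R^2" using T by linarith
      then have "K < R^2 * (c * eps powr q)" using c eps by (simp add: pos_divide_less_eq)
      then have "K / (c * R^2) < eps powr q" using c R by (simp add: pos_divide_less_eq algebra_simps)
      with ub have lt: "u x0 powr q < eps powr q" by linarith
      have "u x0 < eps"
      proof (rule ccontr)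
        assume "\<not> u x0 < eps"
        then have "eps powr q \<le> u x0 powr q" using eps q by (intro powr_mono2) auto
        with lt show False by linarith
      qed
      moreover have "u x0 > 0" using pos x0 by blast
      ultimately show "dist (u x0) 0 < eps" by simp
    qed
  qed
qed

end
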